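(* Under the event-triggered closed loop described in the context, for all $j$ and all $t\in(t_j,t_{j+1})$, $$\dot d(t)^2\le\rho_1d^2(t)+\alpha_1\|\hat w[t]\|^2+\alpha_2|\hat w(1,t)|^2+\alpha_3|\tilde w(0,t)|^2,$$ where $\rho_1=6\varepsilon^2k(1)^2$, $\alpha_1=3\Big(1+\big(\int_0^1\int_0^xL^2(x,y)dydx\big)^{1/2}\Big)^2\int_0^1\big(\varepsilon k''(y)+\varepsilon k(1)k(y)+\lambda k(y)\big)^2dy+6\big(\varepsilon qk(1)+\varepsilon k'(1)\big)^2\int_0^1L^2(1,y)dy$, $\alpha_2=6\big(\varepsilon qk(1)+\varepsilon k'(1)\big)^2$, and $\alpha_3=6\Big(\frac{\lambda k(0)}{2}+\int_0^1k(y)p_1(y)dy\Big)^2$.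
   Context: Setup. $\varepsilon,\lambda>0$, $q>(\lambda+\varepsilon)/(2\varepsilon)$, $r=q-\lambda/(2\varepsilon)$. $I_m,J_m$ are the modified and ordinary Bessel functions of the first kind (with $I_1(z)/z,J_1(z)/z\to1/2$ at $z=0$). Kernels on $0\le y\le x\le1$: $P(x,y)=\frac{q\lambda/\varepsilon}{\sqrt{\lambda/\varepsilon+q^2}}\int_0^{x-y}e^{-q\tau/2}I_0\big(\sqrt{\lambda(2-x-y)(x-y-\tau)/\varepsilon}\big)\sinh\big(\tfrac{\sqrt{\lambda/\varepsilon+q^2}}{2}\tau\big)d\tau-\frac{\lambda}{\varepsilon}(1-y)\frac{I_1(\sqrt{\lambda((1-y)^2-(1-x)^2)/\varepsilon})}{\sqrt{\lambda((1-y)^2-(1-x)^2)/\varepsilon}}$; $Q(x,y)=\frac{q\lambda/\varepsilon}{\sqrt{q^2-\lambda/\varepsilon}}\int_0^{x-y}e^{-q\tau/2}J_0\big(\sqrt{\lambda(2-x-y)(x-y-\tau)/\varepsilon}\big)\sinh\big(\tfrac{\sqrt{q^2-\lambda/\varepsilon}}{2}\tau\big)d\tau-\frac{\lambda}{\varepsilon}(1-y)\frac{J_1(\sqrt{\lambda((1-y)^2-(1-x)^2)/\varepsilon})}{\sqrt{\lambda((1-y)^2-(1-x)^2)/\varepsilon}}$; $K(x,y)=-\frac{\lambda}{\varepsilon}x\frac{I_1(\sqrt{\lambda(x^2-y^2)/\varepsilon})}{\sqrt{\lambda(x^2-y^2)/\varepsilon}}$, $L(x,y)=-\frac{\lambda}{\varepsilon}x\frac{J_1(\sqrt{\lambda(x^2-y^2)/\varepsilon})}{\sqrt{\lambda(x^2-y^2)/\varepsilon}}$.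 Gains $p_1(x)=\varepsilon P_y(x,0)$, $p_{10}=-\lambda/(2\varepsilon)$. Let $k(y)=rK(1,y)+K_x(1,y)$. Closed loop: plant $u_t=\varepsilon u_{xx}+\lambda u$, $u_x(0,t)=0$, $u_x(1,t)+qu(1,t)=U_j$; observer $\hat u_t=\varepsilon\hat u_{xx}+\lambda\hat u+p_1(x)(u(0,t)-\hat u(0,t))$, $\hat u_x(0,t)=p_{10}(u(0,t)-\hat u(0,t))$, $\hat u_x(1,t)+q\hat u(1,t)=U_j$, for $t\in[t_j,t_{j+1})$, with $U_j=\int_0^1k(y)\hat u(y,t_j)dy$. Set $\tilde u=u-\hat u$, $\tilde w(x,t)=\tilde u(x,t)+\int_0^xQ(x,y)\tilde u(y,t)dy$, $\hat w(x,t)=\hat u(x,t)-\int_0^xK(x,y)\hat u(y,t)dy$. The input holding error is $d(t)=\int_0^1k(y)(\hat u(y,t_j)-\hat u(y,t))dy$ for $t\in[t_j,t_{j+1})$, where $0=t_0<t_1<\dots$ is any increasing sequence of update times (e.g. the one generated by the event trigger). *)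

theory Defs
  imports "HOL-Analysis.Analysis"
begin

text \<open>Bessel functions. In the paper they only occur in the combinations
 I_0(sqrt s), I_1(sqrt s)/sqrt s, J_0(sqrt s), J_1(sqrt s)/sqrt s (with value 1/2 at 0 for
 the quotients). We define these combinations through the power series of the Bessel
 functions, as entire functions of s (series in s = z^2).\<close>

definition besselI0_sqrt :: "real \<Rightarrow> real" where
  "besselI0_sqrt s = (\<Sum>n. (s/4)^n / (fact n)^2)"

definition besselI1_div_sqrt :: "real \<Rightarrow> real" where
  "besselI1_div_sqrt s = (\<Sum>n. (s/4)^n / (2 * fact n * fact (Suc n)))"

definition besselJ0_sqrt :: "real \<Rightarrow> real" where
  "besselJ0_sqrt s = (\<Sum>n. (-s/4)^n / (fact n)^2)"

definition besselJ1_div_sqrt :: "real \<Rightarrow> real" where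
  "besselJ1_div_sqrt s = (\<Sum>n. (-s/4)^n / (2 * fact n * fact (Suc n)))"

definition kerP :: "real \<Rightarrow> real \<Rightarrow> real \<Rightarrow> real \<Rightarrow> real \<Rightarrow> real" where
  "kerP eps lam q x y =
     (q * lam / eps) / sqrt (lam / eps + q^2) *
       integral {0..x - y} (\<lambda>\<tau>. exp (- q * \<tau> / 2)
          * besselI0_sqrt (lam * (2 - x - y) * (x - y - \<tau>) / eps)
          * sinh (sqrt (lam / eps + q^2) / 2 * \<tau>))
     - lam / eps * (1 - y) * besselI1_div_sqrt (lam * ((1 - y)^2 - (1 - x)^2) / eps)"

definition kerQ :: "real \<Rightarrow> real \<Rightarrow> real \<Rightarrow> real \<Rightarrow> real \<Rightarrow> real" where
  "kerQ eps lam q x y =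
     (q * lam / eps) / sqrt (q^2 - lam / eps) *
       integral {0..x - y} (\<lambda>\<tau>. exp (- q * \<tau> / 2)
          * besselJ0_sqrt (lam * (2 - x - y) * (x - y - \<tau>) / eps)
          * sinh (sqrt (q^2 - lam / eps) / 2 * \<tau>))
     - lam / eps * (1 - y) * besselJ1_div_sqrt (lam * ((1 - y)^2 - (1 - x)^2) / eps)"

definition kerK :: "real \<Rightarrow> real \<Rightarrow> real \<Rightarrow> real \<Rightarrow> real" where
  "kerK eps lam x y = - (lam / eps) * x * besselI1_div_sqrt (lam * (x^2 - y^2) / eps)"

definition kerL :: "real \<Rightarrow> real \<Rightarrow> real \<Rightarrow> real \<Rightarrow> real" where
  "kerL eps lam x y = - (lam / eps) * x * besselJ1_div_sqrt (lam * (x^2 - y^2) / eps)"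

definition rpar :: "real \<Rightarrow> real \<Rightarrow> real \<Rightarrow> real" where
  "rpar eps lam q = q - lam / (2 * eps)"

definition kgain :: "real \<Rightarrow> real \<Rightarrow> real \<Rightarrow> real \<Rightarrow> real" where
  "kgain eps lam q y = rpar eps lam q * kerK eps lam 1 y + deriv (\<lambda>x. kerK eps lam x y) 1"

definition p1gain :: "real \<Rightarrow> real \<Rightarrow> real \<Rightarrow> real \<Rightarrow> real" where
  "p1gain eps lam q x = eps * deriv (\<lambda>y. kerP eps lam q x y) 0"

definition p10gain :: "real \<Rightarrow> real \<Rightarrow> real" where
  "p10gain eps lam = - lam / (2 * eps)"

end

theory Submission
  imports Defs
begin

definition ps :: "(nat \<Rightarrow> real) \<Rightarrow> real \<Rightarrow> real" where
  "ps c x = (\<Sum>n. c n * x^n)"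

definition entire :: "(nat \<Rightarrow> real) \<Rightarrow> bool" where
  "entire c \<longleftrightarrow> (\<forall>x. summable (\<lambda>n. c n * x^n))"

lemma entire_diffs: "entire c \<Longrightarrow> entire (diffs c)"
  unfolding entire_def by (blast intro: termdiff_converges_all)

lemma ps_deriv: "entire c \<Longrightarrow> (ps c has_real_derivative ps (diffs c) x) (at x)"
  unfolding entire_def ps_def fun_eq_iff
  by (rule termdiffs_strong_converges_everywhere) blast

lemma ps_deriv_chain [derivative_intros]:
  "entire c \<Longrightarrow> (f has_real_derivative f') (at x within S) \<Longrightarrow>
   ((\<lambda>x. ps c (f x)) has_real_derivative ps (diffs c) (f x) * f') (at x within S)"
  by (rule DERIV_chain2[OF ps_deriv])

lemma ps_isCont: "entire c \<Longrightarrow> isCont (ps c) x"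
  using ps_deriv DERIV_isCont by blast

lemma ps_cont [continuous_intros]: "entire c \<Longrightarrow> continuous_on S f \<Longrightarrow> continuous_on S (\<lambda>x. ps c (f x))"
  by (rule continuous_on_compose2[of UNIV "ps c"]) (auto intro: continuous_at_imp_continuous_on ps_isCont)

lemma entire_bound:
  assumes "\<And>n. \<bar>c n\<bar> \<le> 1 / fact n"
  shows "entire c"
  unfolding entire_def
proof
  fix x :: real
  show "summable (\<lambda>n. c n * x^n)"
  proof (rule summable_comparison_test')
    show "summable (\<lambda>n. inverse (fact n) * \<bar>x\<bar>^n)" by (rule summable_exp)
    fix n
    have "norm (c n * x^n) = \<bar>c n\<bar> * \<bar>x\<bar>^n" by (simp add: abs_mult power_abs)
    also have "\<dots> \<le> inverse (fact n) * \<bar>x\<bar>^n"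
      using assms[of n] by (intro mult_right_mono) (auto simp: field_simps)
    finally show "norm (c n * x^n) \<le> inverse (fact n) * \<bar>x\<bar>^n" .
  qed
qed

definition aI :: "nat \<Rightarrow> real" where "aI n = (1/4)^n / (2 * fact n * fact (Suc n))"
definition aJ :: "nat \<Rightarrow> real" where "aJ n = (-1/4)^n / (2 * fact n * fact (Suc n))"

lemma aI_nonneg: "aI n \<ge> 0" by (simp add: aI_def)

lemma aJ_aI: "aJ n = (-1)^n * aI n"
  by (simp add: aJ_def aI_def power_minus' power_divide)

lemma aI_le: "\<bar>aI n\<bar> \<le> 1 / fact n"
proof -
  have "(1/4::real)^n \<le> 1" by (simp add: power_le_one)
  moreover have "(1::real) \<le> 2 * fact (Suc n)" using fact_ge_1[of "Suc n", where 'a=real] by linarith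
  ultimately have "(1/4::real)^n / (2 * fact (Suc n)) \<le> 1"
    by (simp add: divide_le_eq)
  then have "(1/4::real)^n / (2 * fact (Suc n)) / fact n \<le> 1 / fact n"
    by (intro divide_right_mono) auto
  then show ?thesis by (simp add: aI_def abs_of_nonneg field_simps)
qed

lemma entire_aI: "entire aI" by (rule entire_bound[OF aI_le])
lemma entire_aJ: "entire aJ" by (rule entire_bound) (simp add: aJ_aI abs_mult aI_le)

lemma besselI1_ps: "besselI1_div_sqrt = ps aI"
  by (auto simp: fun_eq_iff besselI1_div_sqrt_def ps_def aI_def power_divide field_simps)

lemma besselJ1_ps: "besselJ1_div_sqrt = ps aJ"
  by (auto simp: fun_eq_iff besselJ1_div_sqrt_def ps_def aJ_def power_divide field_simps power_minus')

lemma entire_d1: "entire (diffs aI)" by (intro entire_diffs entire_aI)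
lemma entire_d2: "entire (diffs (diffs aI))" by (intro entire_diffs entire_d1)
lemma entire_d3: "entire (diffs (diffs (diffs aI)))" by (intro entire_diffs entire_d2)

lemmas entires = entire_aI entire_aJ entire_d1 entire_d2 entire_d3

definition KK :: "real \<Rightarrow> real \<Rightarrow> real \<Rightarrow> real" where
  "KK s x y = - s * x * ps aI (s*(x^2-y^2))"
definition LL :: "real \<Rightarrow> real \<Rightarrow> real \<Rightarrow> real" where
  "LL s x y = - s * x * ps aJ (s*(x^2-y^2))"

lemma kerK_ps: "kerK eps lam = KK (lam/eps)"
  by (simp add: fun_eq_iff kerK_def besselI1_ps KK_def)

lemma kerL_ps: "kerL eps lam = LL (lam/eps)"
  by (simp add: fun_eq_iff kerL_def besselJ1_ps LL_def)

definition sig :: "real \<Rightarrow> real \<Rightarrow> real" where "sig s y = s*(1-y^2)"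

definition kk0 :: "real \<Rightarrow> real \<Rightarrow> real \<Rightarrow> real" where
 "kk0 s r y = -s*((r + 1) * ps aI (sig s y) + (2 * s) * ps (diffs aI) (sig s y))"
definition kk1 :: "real \<Rightarrow> real \<Rightarrow> real \<Rightarrow> real" where
 "kk1 s r y = -s*((r + 1) * ps (diffs aI) (sig s y)
     + (2 * s) * ps (diffs (diffs aI)) (sig s y)) * (-(2 * s * y))"
definition kk2 :: "real \<Rightarrow> real \<Rightarrow> real \<Rightarrow> real" where
 "kk2 s r y = -s*(((r + 1) * ps (diffs (diffs aI)) (sig s y)
     + (2 * s) * ps (diffs (diffs (diffs aI))) (sig s y)) * (-(2 * s * y))^2
   + ((r + 1) * ps (diffs aI) (sig s y)
     + (2 * s) * ps (diffs (diffs aI)) (sig s y)) * (-(2 * s)))"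

lemma KK_dx: "((\<lambda>x. KK s x y) has_real_derivative
   -s * (ps aI (s*(x^2-y^2)) + x * (ps (diffs aI) (s*(x^2-y^2)) * (s*(2*x))))) (at x)"
  unfolding KK_def
  by (auto intro!: derivative_eq_intros entires simp: field_simps)

lemma kgain_eq: "kgain eps lam q = kk0 (lam/eps) (rpar eps lam q)"
proof
  fix y
  have "deriv (\<lambda>x. KK (lam/eps) x y) 1 =
     -(lam/eps) * (ps aI ((lam/eps)*(1^2-y^2)) + 1 * (ps (diffs aI) ((lam/eps)*(1^2-y^2)) * ((lam/eps)*(2*1))))"
    by (rule DERIV_imp_deriv[OF KK_dx])
  then show "kgain eps lam q y = kk0 (lam/eps) (rpar eps lam q) y"
    unfolding kgain_def kerK_ps by (simp add: kk0_def KK_def sig_def algebra_simps)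
qed

lemma sig_deriv [derivative_intros]: "(sig s has_real_derivative (-(2 * s * y))) (at y within S)"
  unfolding sig_def[abs_def] by (auto intro!: derivative_eq_intros simp: field_simps)

lemma kk0_deriv: "(kk0 s r has_real_derivative kk1 s r y) (at y within S)"
  unfolding kk0_def[abs_def] kk1_def
  by (auto intro!: derivative_eq_intros entires simp: algebra_simps)

lemma kk1_deriv: "(kk1 s r has_real_derivative kk2 s r y) (at y within S)"
  unfolding kk1_def[abs_def] kk2_def
  by (auto intro!: derivative_eq_intros entires simp: algebra_simps power2_eq_square)

lemma kk2_deriv: "\<exists>D. (kk2 s r has_real_derivative D) (at y)"
  unfolding kk2_def[abs_def]
  by (rule exI, auto intro!: derivative_eq_intros entires)

lemma kk2_cont: "continuous_on S (kk2 s r)"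
  by (meson DERIV_isCont continuous_at_imp_continuous_on kk2_deriv)
lemma kk1_cont: "continuous_on S (kk1 s r)"
  by (meson DERIV_isCont continuous_at_imp_continuous_on kk1_deriv)
lemma kk0_cont: "continuous_on S (kk0 s r)"
  by (meson DERIV_isCont continuous_at_imp_continuous_on kk0_deriv)

lemma deriv_kk0: "deriv (kk0 s r) = kk1 s r"
  using DERIV_imp_deriv[OF kk0_deriv] by blast
lemma deriv_kk1: "deriv (kk1 s r) = kk2 s r"
  using DERIV_imp_deriv[OF kk1_deriv] by blast
lemma kk1_0: "kk1 s r 0 = 0" by (simp add: kk1_def)

lemma KK_cont [continuous_intros]:
  "continuous_on S f \<Longrightarrow> continuous_on S g \<Longrightarrow> continuous_on S (\<lambda>x. KK s (f x) (g x))"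
  unfolding KK_def by (intro continuous_intros entires)
lemma LL_cont [continuous_intros]:
  "continuous_on S f \<Longrightarrow> continuous_on S g \<Longrightarrow> continuous_on S (\<lambda>x. LL s (f x) (g x))"
  unfolding LL_def by (intro continuous_intros entires)

lemma integral_subst_scale:
  assumes x: "0 \<le> x" and c: "continuous_on {0..x} f"
  shows "((\<lambda>t. x * f (x * t)) has_integral integral {0..x} f) {0..1::real}"
proof -
  have "((\<lambda>t. x *\<^sub>R f (x * t)) has_integral integral {x * 0..x * 1} f) {0..1}"
    by (rule has_integral_substitution[where c=0 and d=x])
       (use x c in \<open>auto intro!: derivative_eq_intros mult_left_le\<close>)
  then show ?thesis by simp
qed

lemma param_cont:
  fixes \<phi> :: "real \<Rightarrow> real \<Rightarrow> real"
  assumes c: "continuous_on ({0..1::real}\<times>{0..1::real}) (\<lambda>(x,y). \<phi> x y)"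
  shows "continuous_on {0..1} (\<lambda>x. integral {0..x} (\<phi> x))"
proof -
  have eq: "integral {0..x} (\<phi> x) = integral (cbox 0 1) (\<lambda>t. x * \<phi> x (x * t))" if "x \<in> {0..1}" for x
  proof -
    have "continuous_on {0..x} (\<phi> x)"
      by (rule continuous_on_compose2[OF c, of _ "\<lambda>y. (x, y)", simplified])
         (use that in \<open>auto intro!: continuous_intros\<close>)
    then have "integral {0..1} (\<lambda>t. x * \<phi> x (x * t)) = integral {0..x} (\<phi> x)"
      using that by (intro integral_unique integral_subst_scale) auto
    then show ?thesis by (simp only: cbox_interval)
  qed
  have "continuous_on {0..1} (\<lambda>x. integral (cbox 0 1) (\<lambda>t. x * \<phi> x (x * t)))"
  proof (rule integral_continuous_on_param)
    have "continuous_on ({0..1} \<times> cbox 0 1) (\<lambda>p. \<phi> (fst p) (fst p * snd p))"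
      by (rule continuous_on_compose2[OF c, of _ "\<lambda>p. (fst p, fst p * snd p)", simplified])
         (auto intro!: continuous_intros mult_le_one)
    then show "continuous_on ({0..1} \<times> cbox 0 1) (\<lambda>(x, t). x * \<phi> x (x * t))"
      by (auto simp: split_beta intro!: continuous_intros)
  qed
  then show ?thesis using eq by (metis (no_types, lifting) continuous_on_cong)
qed

lemma cauchy_schwarz_int:
  fixes f g :: "real \<Rightarrow> real"
  assumes f: "continuous_on {a..b} f" and g: "continuous_on {a..b} g"
  shows "(integral {a..b} (\<lambda>x. f x * g x))^2 \<le> integral {a..b} (\<lambda>x. (f x)^2) * integral {a..b} (\<lambda>x. (g x)^2)"
proof -
  define F where "F = integral {a..b} (\<lambda>x. (f x)^2)"
  define G where "G = integral {a..b} (\<lambda>x. (g x)^2)"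
  define P where "P = integral {a..b} (\<lambda>x. f x * g x)"
  have key: "0 \<le> F - 2 * l * P + l^2 * G" for l
  proof -
    have i1: "(\<lambda>x. (f x)^2) integrable_on {a..b}" "(\<lambda>x. f x * g x) integrable_on {a..b}"
      "(\<lambda>x. (g x)^2) integrable_on {a..b}"
      by (auto intro!: integrable_continuous_interval continuous_intros f g)
    have "0 \<le> integral {a..b} (\<lambda>x. (f x - l * g x)^2)"
      by (rule integral_nonneg) (auto intro!: integrable_continuous_interval continuous_intros f g)
    also have "integral {a..b} (\<lambda>x. (f x - l * g x)^2) =
        integral {a..b} (\<lambda>x. (f x)^2 - (2 * l) * (f x * g x) + l^2 * (g x)^2)"
      by (simp add: power2_eq_square algebra_simps)
    also have "\<dots> = F - 2 * l * P + l^2 * G"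
      unfolding F_def G_def P_def
      by (intro integral_unique has_integral_add has_integral_diff has_integral_mult_right integrable_integral i1)
    finally show ?thesis .
  qed
  have G0: "G \<ge> 0" unfolding G_def by (rule integral_nonneg) (auto intro!: integrable_continuous_interval continuous_intros g)
  show ?thesis
  proof (cases "G = 0")
    case True
    have "P = 0"
    proof (rule ccontr)
      assume "P \<noteq> 0"
      have "0 \<le> F - 2 * ((F + 1) / (2 * P)) * P" using key[of "(F+1)/(2*P)"] True by simp
      then show False using \<open>P \<noteq> 0\<close> by (simp add: field_simps)
    qed
    then show ?thesis using True G_def P_def by simp
  next
    case False
    then have Gp: "G > 0" using G0 by simp
    have "0 \<le> F - 2 * (P/G) * P + (P/G)^2 * G" by (rule key)
    then have "0 \<le> F * G - P^2" using Gp by (simp add: field_simps power2_eq_square)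
    then show ?thesis by (simp add: F_def G_def P_def)
  qed
qed

lemma tri_fubini:
  fixes \<psi> :: "real \<Rightarrow> real \<Rightarrow> real"
  assumes a: "0 \<le> a" and c: "continuous_on ({0..a}\<times>{0..a}) (\<lambda>(y,z). \<psi> y z)"
  shows "integral {0..a} (\<lambda>y. integral {0..y} (\<psi> y)) = integral {0..a} (\<lambda>z. integral {z..a} (\<lambda>y. \<psi> y z))"
proof -
  define S where "S = {p::real\<times>real. 0 \<le> snd p \<and> snd p \<le> fst p \<and> fst p \<le> a}"
  have Ssub: "S \<subseteq> {0..a}\<times>{0..a}" by (auto simp: S_def)
  have "closed S" unfolding S_def
    by (intro closed_Collect_conj closed_Collect_le continuous_intros)
  moreover have "bounded S" by (rule bounded_subset[OF _ Ssub]) (simp add: bounded_Times)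
  ultimately have cS: "compact S" by (simp add: compact_eq_bounded_closed)
  have cpsi: "continuous_on S (\<lambda>p. \<psi> (fst p) (snd p))"
    using continuous_on_subset[OF c Ssub] by (simp add: split_beta)
  define F where "F = (\<lambda>y z. indicator S (y, z) *\<^sub>R \<psi> y z)"
  have "integrable lborel (\<lambda>p. indicator S p *\<^sub>R \<psi> (fst p) (snd p))"
    by (rule borel_integrable_compact[OF cS cpsi])
  then have int: "integrable (lborel \<Otimes>\<^sub>M lborel) (case_prod F)"
    by (simp add: lborel_prod F_def split_beta')
  have fub: "(\<integral>z. (\<integral>y. F y z \<partial>lborel) \<partial>lborel) = (\<integral>y. (\<integral>z. F y z \<partial>lborel) \<partial>lborel)"
    by (rule lborel_pair.Fubini_integral[OF int])
  have in1: "(\<integral>z. F y z \<partial>lborel) = indicator {0..a} y *\<^sub>R integral {0..y} (\<psi> y)" for y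
  proof (cases "y \<in> {0..a}")
    case True
    have eq: "F y = (\<lambda>z. indicator {0..y} z *\<^sub>R \<psi> y z)"
      using True by (auto simp: F_def S_def fun_eq_iff split: split_indicator)
    have cy: "continuous_on {0..y} (\<psi> y)"
      by (rule continuous_on_compose2[OF c, of _ "\<lambda>z. (y, z)", simplified])
         (use True in \<open>auto intro!: continuous_intros\<close>)
    have "set_integrable lborel {0..y} (\<psi> y)" by (rule borel_integrable_atLeastAtMost'[OF cy])
    from set_borel_integral_eq_integral(2)[OF this] True show ?thesis
      by (simp add: eq set_lebesgue_integral_def)
  next
    case False
    then have "F y = (\<lambda>z. 0)" by (auto simp: F_def S_def fun_eq_iff split: split_indicator)
    then show ?thesis using False by simp
  qed
  have in2: "(\<integral>y. F y z \<partial>lborel) = indicator {0..a} z *\<^sub>R integral {z..a} (\<lambda>y. \<psi> y z)" for z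
  proof (cases "z \<in> {0..a}")
    case True
    have eq: "(\<lambda>y. F y z) = (\<lambda>y. indicator {z..a} y *\<^sub>R \<psi> y z)"
      using True by (auto simp: F_def S_def fun_eq_iff split: split_indicator)
    have cz: "continuous_on {z..a} (\<lambda>y. \<psi> y z)"
      by (rule continuous_on_compose2[OF c, of _ "\<lambda>y. (y, z)", simplified])
         (use True in \<open>auto intro!: continuous_intros\<close>)
    have "set_integrable lborel {z..a} (\<lambda>y. \<psi> y z)" by (rule borel_integrable_atLeastAtMost'[OF cz])
    from set_borel_integral_eq_integral(2)[OF this] True show ?thesis
      by (simp add: eq set_lebesgue_integral_def)
  next
    case False
    then have "(\<lambda>y. F y z) = (\<lambda>y. 0)" by (auto simp: F_def S_def fun_eq_iff split: split_indicator)
    then show ?thesis using False by simp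
  qed
  have i1: "integrable lborel (\<lambda>y. \<integral>z. F y z \<partial>lborel)"
    by (rule lborel_pair.integrable_fst[OF int])
  have i2: "integrable lborel (\<lambda>z. \<integral>y. F y z \<partial>lborel)"
    by (rule lborel_pair.integrable_snd[OF int])
  have s1: "set_integrable lborel {0..a} (\<lambda>y. integral {0..y} (\<psi> y))"
    using i1 unfolding set_integrable_def in1 .
  have s2: "set_integrable lborel {0..a} (\<lambda>z. integral {z..a} (\<lambda>y. \<psi> y z))"
    using i2 unfolding set_integrable_def in2 .
  have "integral {0..a} (\<lambda>y. integral {0..y} (\<psi> y)) = (\<integral>y. (\<integral>z. F y z \<partial>lborel) \<partial>lborel)"
    using set_borel_integral_eq_integral(2)[OF s1] by (simp add: in1 set_lebesgue_integral_def)
  also have "\<dots> = (\<integral>z. (\<integral>y. F y z \<partial>lborel) \<partial>lborel)" by (rule fub[symmetric])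
  also have "\<dots> = integral {0..a} (\<lambda>z. integral {z..a} (\<lambda>y. \<psi> y z))"
    using set_borel_integral_eq_integral(2)[OF s2] by (simp add: in2 set_lebesgue_integral_def)
  finally show ?thesis .
qed

lemma beta_int:
  fixes T :: real
  assumes T: "0 \<le> T"
  shows "((\<lambda>v. (T-v)^m * v^n) has_integral (fact m * fact n / fact (m+n+1)) * T^(m+n+1)) {0..T}"
  using assms
proof (induction m arbitrary: n)
  case 0
  have "((\<lambda>v. v^n) has_integral (T^(n+1)/(n+1) - 0^(n+1)/(n+1))) {0..T}"
  proof (rule fundamental_theorem_of_calculus[OF T])
    fix x assume "x \<in> {0..T}"
    have "((\<lambda>v. v^(n+1)/(n+1)) has_real_derivative (real (n+1) * x^(n+1 - Suc 0)) / (n+1)) (at x within {0..T})"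
      by (intro DERIV_cdivide DERIV_pow)
    then show "((\<lambda>v. v^(n+1)/(n+1)) has_vector_derivative x^n) (at x within {0..T})"
      by (simp add: has_real_derivative_iff_has_vector_derivative[symmetric])
  qed
  moreover have "fact 0 * fact n / fact (0+n+1) * T^(0+n+1) = T^(n+1)/(n+1)"
    by (simp add: divide_simps del: of_nat_Suc)
  ultimately show ?case by simp
next
  case (Suc m)
  define c where "c = (fact m * fact (n+1) / fact (m+(n+1)+1)) * T^(m+(n+1)+1)"
  have IH: "((\<lambda>v. (T-v)^m * v^(n+1)) has_integral c) {0..T}" using Suc c_def by blast
  have D: "((\<lambda>v. - (real (m+1)) * (T-v)^m * v^(n+1) + real (n+1) * (T-v)^(m+1) * v^n) has_integral
      ((T-T)^(m+1) * T^(n+1) - (T-0)^(m+1)*0^(n+1))) {0..T}"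
  proof (rule fundamental_theorem_of_calculus[OF T])
    fix v assume "v \<in> {0..T}"
    show "((\<lambda>v. (T-v)^(m+1) * v^(n+1)) has_vector_derivative
        (- (real (m+1)) * (T-v)^m * v^(n+1) + real (n+1) * (T-v)^(m+1) * v^n)) (at v within {0..T})"
    proof -
      have d: "((\<lambda>v. (T-v)^(m+1) * v^(n+1)) has_real_derivative
        (of_nat (m+1) * ((0 - 1) * (T-v)^(m+1 - Suc 0))) * v^(n+1) + (of_nat (n+1) * (1 * v^(n+1 - Suc 0))) * (T-v)^(m+1)) (at v within {0..T})"
        by (intro DERIV_mult DERIV_power DERIV_diff DERIV_const DERIV_ident)
      have e: "(of_nat (m+1) * ((0 - 1) * (T-v)^(m+1 - Suc 0))) * v^(n+1) + (of_nat (n+1) * (1 * v^(n+1 - Suc 0))) * (T-v)^(m+1)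
         = (- (real (m+1)) * (T-v)^m * v^(n+1) + real (n+1) * (T-v)^(m+1) * v^n)"
      proof -
        have h: "m+1 - Suc 0 = m" "n+1 - Suc 0 = n" by simp_all
        show ?thesis unfolding h by (simp add: algebra_simps)
      qed
      show ?thesis using d unfolding e has_real_derivative_iff_has_vector_derivative .
    qed
  qed
  have D': "((\<lambda>v. - (real (m+1)) * (T-v)^m * v^(n+1) + real (n+1) * (T-v)^(m+1) * v^n) has_integral 0) {0..T}"
    using D by simp
  have "((\<lambda>v. (- (real (m+1)) * (T-v)^m * v^(n+1) + real (n+1) * (T-v)^(m+1) * v^n)
         + real (m+1) * ((T-v)^m * v^(n+1))) has_integral 0 + real (m+1) * c) {0..T}"
    by (intro has_integral_add D' has_integral_mult_right IH)
  then have "((\<lambda>v. real (n+1) * ((T-v)^(m+1) * v^n)) has_integral real (m+1) * c) {0..T}"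
    by (simp add: algebra_simps)
  then have "((\<lambda>v. (1 / real (n+1)) * (real (n+1) * ((T-v)^(m+1) * v^n))) has_integral (1 / real (n+1)) * (real (m+1) * c)) {0..T}"
    by (rule has_integral_mult_right)
  then have "((\<lambda>v. (T-v)^(Suc m) * v^n) has_integral (real (m+1) * c) / real (n+1)) {0..T}"
    by simp
  moreover have "(real (m+1) * c) / real (n+1) = (fact (Suc m) * fact n / fact (Suc m+n+1)) * T^(Suc m+n+1)"
  proof -
    have e1: "m+(n+1)+1 = Suc m+n+1" by simp
    have e2: "fact (n+1) = real (n+1) * (fact n::real)" "fact (Suc m) = real (m+1) * (fact m::real)"
      by (simp_all add: fact_Suc del: of_nat_Suc)
    define F where "F = (fact (Suc m+n+1)::real)"
    define P where "P = T^(Suc m+n+1)"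
    have "F > 0" unfolding F_def by simp
    then show ?thesis unfolding c_def e1 e2 F_def[symmetric] P_def[symmetric]
      by (simp add: field_simps del: of_nat_Suc)
  qed
  ultimately show ?case by simp
qed

lemma alt_choose_sum: "(\<Sum>m\<le>N. (-1)^m * real ((N+2) choose (m+1))) = 1 + (-1)^N"
proof -
  have "0 = (\<Sum>i\<le>N+2. (-1)^i * real ((N+2) choose i))"
    by (rule choose_alternating_sum[symmetric]) simp
  also have "\<dots> = (\<Sum>i\<le>Suc N. (-1)^i * real ((N+2) choose i)) + (-1)^(N+2)"
    by (simp add: sum.atMost_Suc)
  also have "(\<Sum>i\<le>Suc N. (-1)^i * real ((N+2) choose i)) = 1 + (\<Sum>m\<le>N. (-1)^(Suc m) * real ((N+2) choose (Suc m)))"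
    by (subst sum.atMost_Suc_shift) simp
  also have "(\<Sum>m\<le>N. (-1)^(Suc m) * real ((N+2) choose (Suc m))) = - (\<Sum>m\<le>N. (-1)^m * real ((N+2) choose (m+1)))"
    by (simp add: sum_negf[symmetric])
  finally show ?thesis by simp
qed

lemma coef_identity:
  "(\<Sum>m\<le>N. aJ m * aI (N-m) * (fact m * fact (N-m) / fact (N+1))) = 2 * (aI (Suc N) - aJ (Suc N))"
proof -
  have t: "aJ m * aI (N-m) * (fact m * fact (N-m) / fact (N+1)) =
      ((1/4)^N / (4 * fact (N+1) * fact (N+2))) * ((-1)^m * real ((N+2) choose (m+1)))" if "m \<le> N" for m
  proof -
    define k where "k = N - m"
    have N: "N = m + k" using that by (simp add: k_def)
    have b: "real ((m+k+2) choose (m+1)) = fact (m+k+2) / (fact (m+1) * fact (k+1))"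
      using binomial_fact[of "m+1" "m+k+2", where 'a=real] by simp
    have b': "real ((N+2) choose (m+1)) = fact (N+2) / (fact (Suc m) * fact (Suc k))"
      using b unfolding N by simp
    have g1: "\<And>p A B::real. A \<noteq> 0 \<Longrightarrow> p/(2*A*B)*A = p/(2*B)" by (simp add: field_simps)
    have af: "aI j * fact j = (1/4)^j / (2 * fact (Suc j))" for j
      unfolding aI_def by (rule g1) simp
    have "aJ m * aI (N-m) * (fact m * fact (N-m) / fact (N+1)) =
       (-1)^m * (aI m * fact m) * (aI k * fact k) / fact (N+1)"
      unfolding aJ_aI k_def[symmetric] by (simp only: mult_ac times_divide_eq_right)
    also have "\<dots> = (-1)^m * ((1/4)^m / (2 * fact (Suc m))) * ((1/4)^k / (2 * fact (Suc k))) / fact (N+1)"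
      by (simp only: af)
    also have "\<dots> = ((1/4)^N / (4 * fact (N+1) * fact (N+2))) * ((-1)^m * (fact (N+2) / (fact (Suc m) * fact (Suc k))))"
    proof -
      have gen: "\<And>x p q A B C D::real. A\<noteq>0 \<Longrightarrow> B\<noteq>0 \<Longrightarrow> C\<noteq>0 \<Longrightarrow> D\<noteq>0 \<Longrightarrow>
          x*(p/(2*A))*(q/(2*B))/C = (p*q/(4*C*D))*(x*(D/(A*B)))" by (simp add: field_simps)
      show ?thesis unfolding N power_add
        by (rule gen) simp_all
    qed
    finally show ?thesis unfolding b' .
  qed
  have "(\<Sum>m\<le>N. aJ m * aI (N-m) * (fact m * fact (N-m) / fact (N+1))) =
     (\<Sum>m\<le>N. ((1/4)^N / (4 * fact (N+1) * fact (N+2))) * ((-1)^m * real ((N+2) choose (m+1))))"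
    by (rule sum.cong[OF refl], rule t) simp
  also have "\<dots> = ((1/4)^N / (4 * fact (N+1) * fact (N+2))) * (\<Sum>m\<le>N. (-1)^m * real ((N+2) choose (m+1)))"
    by (rule sum_distrib_left[symmetric])
  also have "\<dots> = ((1/4)^N / (4 * fact (N+1) * fact (N+2))) * (1 + (-1)^N)"
    by (simp only: alt_choose_sum)
  also have "\<dots> = 2 * (aI (Suc N) * (1 + (-1)^N))"
  proof -
    have g: "\<And>p A B x::real. A\<noteq>0 \<Longrightarrow> B\<noteq>0 \<Longrightarrow> p/(4*A*B)*x = 2*((p/4)/(2*A*B)*x)" by (simp add: field_simps)
    have e2: "aI (Suc N) = (1/4)^N/4 / (2*fact (N+1)*fact (N+2))"
      by (simp add: aI_def)
    show ?thesis using g[of "fact (N+1)" "fact (N+2)" "(1/4)^N" "1+(-1)^N"] by (simp add: e2)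
  qed
  also have "\<dots> = 2 * (aI (Suc N) - aJ (Suc N))" by (simp add: aJ_aI algebra_simps)
  finally show ?thesis .
qed

lemma fact_mult_le_fact: "fact m * fact n \<le> (fact (m+n+1) :: real)"
proof -
  have "fact m * fact n * ((m+n) choose m) = (fact (m+n) :: nat)"
    using binomial_fact_lemma[of m "m+n"] by simp
  moreover have "((m+n) choose m) \<ge> 1"
  proof -
    have "0 < (m+n) choose m" by (rule zero_less_binomial) simp
    then show ?thesis by linarith
  qed
  ultimately have "fact m * fact n \<le> (fact (m+n) :: nat)"
    by (metis mult.right_neutral mult_le_mono2)
  also have "\<dots> \<le> fact (m+n+1)" by (rule fact_mono) simp
  finally have "fact m * fact n \<le> (fact (m+n+1) :: nat)" .
  then have "real (fact m * fact n) \<le> real (fact (m+n+1))" by linarith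
  then show ?thesis by (simp only: of_nat_mult of_nat_fact)
qed

lemma finite_square_eventually:
  fixes X :: "(nat \<times> nat) set"
  assumes "finite X"
  shows "eventually (\<lambda>M. X \<subseteq> {..<M}\<times>{..<M}) sequentially"
proof -
  define M0 where "M0 = Suc (Max (fst ` X \<union> snd ` X))"
  have "\<forall>p\<in>X. fst p < M0 \<and> snd p < M0"
    using assms by (auto simp: M0_def le_imp_less_Suc)
  then show ?thesis
    by (intro eventually_sequentiallyI[of M0]) force
qed

lemma square_sums_tendsto:
  fixes c :: "nat \<times> nat \<Rightarrow> real"
  assumes "(c has_sum S) UNIV"
  shows "(\<lambda>M. sum c ({..<M}\<times>{..<M})) \<longlonglongrightarrow> S"
proof -
  have "filterlim (\<lambda>M::nat. {..<M}\<times>{..<M}) (finite_subsets_at_top (UNIV :: (nat\<times>nat) set)) sequentially"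
    unfolding filterlim_finite_subsets_at_top
    by (auto intro: finite_square_eventually)
  from filterlim_compose[OF assms[unfolded has_sum_def] this] show ?thesis .
qed

definition cc :: "real \<Rightarrow> nat \<times> nat \<Rightarrow> real" where
  "cc T p = aJ (fst p) * aI (snd p) * (fact (fst p) * fact (snd p) / fact (fst p + snd p + 1)) * T^(fst p + snd p + 1)"

lemma cc_has_sum:
  assumes T: "0 \<le> T"
  shows "(cc T has_sum 2 * (ps aI T - ps aJ T)) UNIV"
proof -
  define \<alpha> where "\<alpha> n = aI n * T^n" for n
  have a0: "\<alpha> n \<ge> 0" for n using T by (simp add: \<alpha>_def aI_nonneg)
  have sa: "summable \<alpha>" using entire_aI unfolding entire_def \<alpha>_def by blast
  define Sa where "Sa = suminf \<alpha>"
  have ha: "(\<alpha> has_sum Sa) UNIV"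
    using sums_nonneg_imp_has_sum[OF summable_sums[OF sa] a0] by (simp add: Sa_def)
  define g where "g p = \<alpha> (fst p) * \<alpha> (snd p) * T" for p :: "nat \<times> nat"
  have gs: "g summable_on (Sigma UNIV (\<lambda>_. UNIV))"
  proof (rule summable_on_SigmaI)
    show "((\<lambda>n. g (m, n)) has_sum (\<alpha> m * T * Sa)) UNIV" for m
      using has_sum_cmult_right[OF ha, of "\<alpha> m * T"] by (simp add: g_def mult_ac)
    show "(\<lambda>m. \<alpha> m * T * Sa) summable_on UNIV"
      using has_sum_cmult_left[OF ha, of "T * Sa"] unfolding summable_on_def by (auto simp: mult_ac)
    show "0 \<le> g (m, n)" for m n using a0 T by (simp add: g_def)
  qed
  then have gs': "(\<lambda>p. norm (g p)) summable_on UNIV"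
  proof -
    have U: "Sigma UNIV (\<lambda>_. UNIV) = (UNIV :: (nat\<times>nat) set)" by auto
    show ?thesis using gs summable_on_iff_abs_summable_on_real unfolding U by blast
  qed
  have "(\<lambda>p. norm (cc T p)) summable_on UNIV"
  proof (rule Infinite_Sum.abs_summable_on_comparison_test[OF gs'])
    fix p :: "nat \<times> nat"
    obtain m n where p: "p = (m, n)" by fastforce
    have b: "fact m * fact n / fact (m+n+1) \<le> (1::real)"
      using fact_mult_le_fact[of m n] by simp
    have "norm (cc T p) = aI m * aI n * (fact m * fact n / fact (m+n+1)) * T^(m+n+1)"
      using T by (simp add: cc_def p aJ_aI abs_mult aI_nonneg power_abs)
    also have "\<dots> \<le> aI m * aI n * 1 * T^(m+n+1)"
      using b T by (intro mult_right_mono mult_left_mono) (auto simp: aI_nonneg)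
    also have "\<dots> = g p" by (simp add: g_def p \<alpha>_def power_add)
    also have "\<dots> = norm (g p)" using a0 T by (simp add: g_def)
    finally show "norm (cc T p) \<le> norm (g p)" .
  qed
  then have cs: "cc T summable_on UNIV" by (rule abs_summable_summable)
  define S where "S = infsum (cc T) UNIV"
  have hS: "(cc T has_sum S) UNIV" using cs by (simp add: S_def)
  define h where "h p = (snd p, fst p - snd p)" for p :: "nat \<times> nat"
  have bij: "bij_betw h (Sigma UNIV (\<lambda>N. {..N})) UNIV"
  proof (rule bij_betwI[where g="\<lambda>p. (fst p + snd p, fst p)"])
    show "h \<in> Sigma UNIV (\<lambda>N. {..N}) \<rightarrow> UNIV" by simp
    show "(\<lambda>p::nat\<times>nat. (fst p + snd p, fst p)) \<in> UNIV \<rightarrow> Sigma UNIV (\<lambda>N. {..N})" by (auto simp: le_add1)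
    show "(fst (h x) + snd (h x), fst (h x)) = x" if "x \<in> Sigma UNIV (\<lambda>N. {..N})" for x
      using that by (auto simp: h_def)
    show "h (fst y + snd y, fst y) = y" for y by (simp add: h_def)
  qed
  have "((\<lambda>p. cc T (h p)) has_sum S) (Sigma UNIV (\<lambda>N. {..N}))"
    using has_sum_reindex_bij_betw[OF bij] hS by blast
  then have "((\<lambda>N. \<Sum>m\<le>N. cc T (h (N, m))) has_sum S) UNIV"
    by (rule has_sum_Sigma') (auto intro: has_sum_finite)
  then have s1: "(\<lambda>N. \<Sum>m\<le>N. cc T (h (N, m))) sums S" by (rule has_sum_imp_sums)
  have eqN: "(\<Sum>m\<le>N. cc T (h (N, m))) = 2 * (aI (Suc N) - aJ (Suc N)) * T^(Suc N)" for N
  proof -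
    have "(\<Sum>m\<le>N. cc T (h (N, m))) = (\<Sum>m\<le>N. aJ m * aI (N-m) * (fact m * fact (N-m) / fact (N+1)) * T^(N+1))"
      by (rule sum.cong[OF refl]) (simp add: cc_def h_def)
    also have "\<dots> = (\<Sum>m\<le>N. aJ m * aI (N-m) * (fact m * fact (N-m) / fact (N+1))) * T^(N+1)"
      by (simp add: sum_distrib_right)
    also have "\<dots> = 2 * (aI (Suc N) - aJ (Suc N)) * T^(Suc N)"
      by (simp only: coef_identity) simp
    finally show ?thesis .
  qed
  have s2: "(\<lambda>N. 2 * (aI N - aJ N) * T^N) sums (2 * (ps aI T - ps aJ T))"
  proof -
    have "(\<lambda>N. aI N * T^N) sums ps aI T" unfolding ps_def
      using entire_aI unfolding entire_def by (blast intro: summable_sums)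
    moreover have "(\<lambda>N. aJ N * T^N) sums ps aJ T" unfolding ps_def
      using entire_aJ unfolding entire_def by (blast intro: summable_sums)
    ultimately have "(\<lambda>N. aI N * T^N - aJ N * T^N) sums (ps aI T - ps aJ T)" by (rule sums_diff)
    from sums_mult[OF this, of 2] show ?thesis by (simp add: algebra_simps)
  qed
  have "(\<lambda>N. 2 * (aI (Suc N) - aJ (Suc N)) * T^(Suc N)) sums (2 * (ps aI T - ps aJ T))"
    using s2 sums_Suc_iff[of "\<lambda>N. 2 * (aI N - aJ N) * T^N"] by (simp add: aI_def aJ_def)
  with s1 have "S = 2 * (ps aI T - ps aJ T)"
    unfolding eqN using sums_unique2 by blast
  with hS show ?thesis by simp
qed

lemma trunc_integral:
  assumes T: "0 \<le> T"
  shows "((\<lambda>v. (\<Sum>m<M. aJ m * (T-v)^m) * (\<Sum>n<M. aI n * v^n)) has_integral sum (cc T) ({..<M}\<times>{..<M})) {0..T}"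
proof -
  have eq: "(\<lambda>v. (\<Sum>m<M. aJ m * (T-v)^m) * (\<Sum>n<M. aI n * v^n)) =
      (\<lambda>v. \<Sum>m<M. \<Sum>n<M. (aJ m * aI n) * ((T-v)^m * v^n))"
    unfolding sum_product by (simp add: mult_ac)
  have "((\<lambda>v. \<Sum>m<M. \<Sum>n<M. (aJ m * aI n) * ((T-v)^m * v^n)) has_integral
      (\<Sum>m<M. \<Sum>n<M. (aJ m * aI n) * ((fact m * fact n / fact (m+n+1)) * T^(m+n+1)))) {0..T}"
    by (intro has_integral_sum finite_lessThan has_integral_mult_right beta_int T)
  moreover have "(\<Sum>m<M. \<Sum>n<M. (aJ m * aI n) * ((fact m * fact n / fact (m+n+1)) * T^(m+n+1))) =
      sum (cc T) ({..<M}\<times>{..<M})"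
    by (simp add: sum.cartesian_product cc_def mult_ac split_beta)
  ultimately show ?thesis unfolding eq by simp
qed

lemma conv_identity:
  assumes T: "0 \<le> T"
  shows "integral {0..T} (\<lambda>v. ps aJ (T - v) * ps aI v) = 2 * (ps aI T - ps aJ T)"
proof -
  have u1: "uniform_limit {0..T} (\<lambda>M v. \<Sum>m<M. aJ m * (T-v)^m) (\<lambda>v. ps aJ (T - v)) sequentially"
    unfolding ps_def
  proof (rule Weierstrass_m_test)
    show "summable (\<lambda>m. aI m * T^m)" using entire_aI unfolding entire_def by blast
    fix m and v :: real assume v: "v \<in> {0..T}"
    have "norm (aJ m * (T-v)^m) = aI m * (T-v)^m"
      using v by (simp add: aJ_aI abs_mult aI_nonneg power_abs)
    also have "\<dots> \<le> aI m * T^m"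
      using v by (intro mult_left_mono power_mono) (auto simp: aI_nonneg)
    finally show "norm (aJ m * (T-v)^m) \<le> aI m * T^m" .
  qed
  have u2: "uniform_limit {0..T} (\<lambda>M v. \<Sum>n<M. aI n * v^n) (\<lambda>v. ps aI v) sequentially"
    unfolding ps_def
  proof (rule Weierstrass_m_test)
    show "summable (\<lambda>m. aI m * T^m)" using entire_aI unfolding entire_def by blast
    fix m and v :: real assume v: "v \<in> {0..T}"
    have "norm (aI m * v^m) = aI m * v^m"
      using v by (simp add: abs_mult aI_nonneg power_abs)
    also have "\<dots> \<le> aI m * T^m"
      using v by (intro mult_left_mono power_mono) (auto simp: aI_nonneg)
    finally show "norm (aI m * v^m) \<le> aI m * T^m" .
  qed
  have c1: "continuous_on {0..T} (\<lambda>v. ps aJ (T - v))" by (intro continuous_intros entires)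
  have c2: "continuous_on {0..T} (\<lambda>v. ps aI v)" by (intro continuous_intros entires)
  have b1: "bounded ((\<lambda>v. ps aJ (T - v)) ` {0..T})"
    by (intro compact_imp_bounded compact_continuous_image c1 compact_Icc)
  have b2: "bounded ((\<lambda>v. ps aI v) ` {0..T})"
    by (intro compact_imp_bounded compact_continuous_image c2 compact_Icc)
  have u: "uniform_limit {0..T} (\<lambda>M v. (\<Sum>m<M. aJ m * (T-v)^m) * (\<Sum>n<M. aI n * v^n))
      (\<lambda>v. ps aJ (T - v) * ps aI v) sequentially"
    by (rule uniform_lim_mult[OF u1 u2 b1 b2])
  obtain I J where I: "\<And>M. ((\<lambda>v. (\<Sum>m<M. aJ m * (T-v)^m) * (\<Sum>n<M. aI n * v^n)) has_integral I M) {0..T}"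
    and J: "((\<lambda>v. ps aJ (T - v) * ps aI v) has_integral J) {0..T}" and IJ: "I \<longlonglongrightarrow> J"
    by (rule uniform_limit_integral[OF u]) (auto intro!: continuous_intros)
  have "I M = sum (cc T) ({..<M}\<times>{..<M})" for M
    using has_integral_unique[OF I trunc_integral[OF T]] .
  then have "I = (\<lambda>M. sum (cc T) ({..<M}\<times>{..<M}))" by (rule ext)
  then have "(\<lambda>M. sum (cc T) ({..<M}\<times>{..<M})) \<longlonglongrightarrow> J" using IJ by simp
  moreover have "(\<lambda>M. sum (cc T) ({..<M}\<times>{..<M})) \<longlonglongrightarrow> 2 * (ps aI T - ps aJ T)"
    by (rule square_sums_tendsto[OF cc_has_sum[OF T]])
  ultimately have "J = 2 * (ps aI T - ps aJ T)" by (rule LIMSEQ_unique)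
  then show ?thesis using J by (simp add: integral_unique)
qed

lemma kernel_identity:
  assumes s: "0 < s" and z: "0 \<le> z" and zx: "z \<le> x"
  shows "LL s x z - integral {z..x} (\<lambda>y. LL s x y * KK s y z) = KK s x z"
proof -
  define D where "D = s * (x^2 - z^2)"
  have D0: "0 \<le> D" unfolding D_def using s z zx by (intro mult_nonneg_nonneg) (auto simp: power_mono)
  define f where "f w = ps aJ (D - w) * ps aI w" for w
  have cf: "continuous_on {0..D} f" unfolding f_def by (intro continuous_intros entires)
  have sub: "((\<lambda>y. (2 * s * y) *\<^sub>R f (s*(y^2 - z^2))) has_integral integral {s*(z^2-z^2)..s*(x^2-z^2)} f) {z..x}"
  proof (rule has_integral_substitution[where c=0 and d=D])
    show "z \<le> x" by fact
    show "s*(z^2-z^2) \<le> s*(x^2-z^2)" using D0 by (simp add: D_def)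
    show "(\<lambda>y. s*(y^2 - z^2)) ` {z..x} \<subseteq> {0..D}"
      using s z by (auto simp: D_def intro!: mult_left_mono power_mono)
    show "continuous_on {0..D} f" by (rule cf)
    fix y assume "y \<in> {z..x}"
    show "((\<lambda>y. s*(y^2 - z^2)) has_real_derivative 2 * s * y) (at y within {z..x})"
      by (auto intro!: derivative_eq_intros)
  qed
  have "integral {s*(z^2-z^2)..s*(x^2-z^2)} f = 2 * (ps aI D - ps aJ D)"
    using conv_identity[OF D0] by (simp add: D_def f_def[abs_def])
  then have sub': "((\<lambda>y. (2 * s * y) * f (s*(y^2 - z^2))) has_integral 2 * (ps aI D - ps aJ D)) {z..x}"
    using sub by simp
  have "((\<lambda>y. (s * x / 2) * ((2 * s * y) * f (s*(y^2 - z^2)))) has_integral (s * x / 2) * (2 * (ps aI D - ps aJ D))) {z..x}"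
    by (rule has_integral_mult_right[OF sub'])
  moreover have "(\<lambda>y. (s * x / 2) * ((2 * s * y) * f (s*(y^2 - z^2)))) = (\<lambda>y. LL s x y * KK s y z)"
  proof
    fix y
    have "D - s*(y^2 - z^2) = s*(x^2-y^2)" by (simp add: D_def algebra_simps)
    then show "(s * x / 2) * ((2 * s * y) * f (s*(y^2 - z^2))) = LL s x y * KK s y z"
      by (simp add: f_def LL_def KK_def)
  qed
  ultimately have "integral {z..x} (\<lambda>y. LL s x y * KK s y z) = (s * x / 2) * (2 * (ps aI D - ps aJ D))"
    by (simp add: integral_unique)
  then have eqI: "integral {z..x} (\<lambda>y. LL s x y * KK s y z) = s * x * (ps aI D - ps aJ D)" by (simp add: algebra_simps)
  have l: "LL s x z = - s * x * ps aJ D" and k: "KK s x z = - s * x * ps aI D"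
    by (simp_all add: LL_def KK_def D_def)
  show ?thesis unfolding eqI l k by (simp add: algebra_simps)
qed

lemma cont_sub01:
  fixes \<phi> :: "real \<Rightarrow> real \<Rightarrow> real"
  assumes "continuous_on ({0..1}\<times>{0..1}) (\<lambda>(a,b). \<phi> a b)" "x \<in> {0..1}"
  shows "continuous_on ({0..x}\<times>{0..x}) (\<lambda>(a,b). \<phi> a b)"
  by (rule continuous_on_subset[OF assms(1)]) (use assms(2) in auto)

lemma inverse_transform:
  fixes f :: "real \<Rightarrow> real"
  assumes s: "0 < s" and f: "continuous_on {0..1} f" and x: "x \<in> {0..1}"
  shows "f x = (f x - integral {0..x} (\<lambda>z. KK s x z * f z))
      + integral {0..x} (\<lambda>y. LL s x y * (f y - integral {0..y} (\<lambda>z. KK s y z * f z)))"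
proof -
  define G where "G y = integral {0..y} (\<lambda>z. KK s y z * f z)" for y
  have cKf: "continuous_on ({0..1}\<times>{0..1}) (\<lambda>(y,z). KK s y z * f z)"
    by (auto simp: split_beta intro!: continuous_intros continuous_on_compose2[OF f])
  have cG: "continuous_on {0..1} G"
    unfolding G_def by (rule param_cont[OF cKf])
  have x0: "0 \<le> x" "x \<le> 1" using x by auto
  have sub: "{0..x} \<subseteq> {0..1}" using x by auto
  have cf': "continuous_on {0..x} f" using continuous_on_subset[OF f sub] .
  have cG': "continuous_on {0..x} G" using continuous_on_subset[OF cG sub] .
  have i1: "(\<lambda>y. LL s x y * f y) integrable_on {0..x}"
    by (intro integrable_continuous_interval continuous_intros cf')
  have i2: "(\<lambda>y. LL s x y * G y) integrable_on {0..x}"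
    by (intro integrable_continuous_interval continuous_intros cG')
  have "integral {0..x} (\<lambda>y. LL s x y * G y) = integral {0..x} (\<lambda>y. integral {0..y} (\<lambda>z. LL s x y * KK s y z * f z))"
    by (simp add: G_def mult.assoc)
  also have "\<dots> = integral {0..x} (\<lambda>z. integral {z..x} (\<lambda>y. LL s x y * KK s y z * f z))"
  proof (rule tri_fubini[OF x0(1)])
    have "continuous_on ({0..1}\<times>{0..1}) (\<lambda>(y,z). LL s x y * KK s y z * f z)"
      by (auto simp: split_beta intro!: continuous_intros continuous_on_compose2[OF f])
    then show "continuous_on ({0..x}\<times>{0..x}) (\<lambda>(y,z). LL s x y * KK s y z * f z)"
      by (rule cont_sub01[OF _ x])
  qed
  also have "\<dots> = integral {0..x} (\<lambda>z. (LL s x z - KK s x z) * f z)"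
  proof (rule integral_cong)
    fix z assume z: "z \<in> {0..x}"
    have "integral {z..x} (\<lambda>y. LL s x y * KK s y z * f z) = integral {z..x} (\<lambda>y. LL s x y * KK s y z) * f z"
      by simp
    also have "integral {z..x} (\<lambda>y. LL s x y * KK s y z) = LL s x z - KK s x z"
      using kernel_identity[OF s, of z x] z by simp
    finally show "integral {z..x} (\<lambda>y. LL s x y * KK s y z * f z) = (LL s x z - KK s x z) * f z" .
  qed
  finally have eq1: "integral {0..x} (\<lambda>y. LL s x y * G y) = integral {0..x} (\<lambda>z. (LL s x z - KK s x z) * f z)" .
  have i3: "(\<lambda>z. KK s x z * f z) integrable_on {0..x}"
    by (intro integrable_continuous_interval continuous_intros cf')
  have "integral {0..x} (\<lambda>y. LL s x y * (f y - G y)) = integral {0..x} (\<lambda>y. LL s x y * f y - LL s x y * G y)"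
    by (simp add: algebra_simps)
  also have "\<dots> = integral {0..x} (\<lambda>y. LL s x y * f y) - integral {0..x} (\<lambda>y. LL s x y * G y)"
    by (rule integral_diff[OF i1 i2])
  also have "\<dots> = integral {0..x} (\<lambda>y. LL s x y * f y) - integral {0..x} (\<lambda>z. LL s x z * f z - KK s x z * f z)"
    unfolding eq1 by (simp add: algebra_simps)
  also have "\<dots> = integral {0..x} (\<lambda>z. KK s x z * f z)"
    using integral_diff[OF i1 i3] by simp
  finally have "integral {0..x} (\<lambda>y. LL s x y * (f y - G y)) = G x" by (simp add: G_def)
  then show ?thesis unfolding G_def by simp
qed

lemma ibp2:
  fixes f0 f1 f2 :: "real \<Rightarrow> real"
  assumes d0: "\<And>y. y \<in> {0..1} \<Longrightarrow> (f0 has_real_derivative f1 y) (at y within {0..1})"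
    and d1: "\<And>y. y \<in> {0..1} \<Longrightarrow> (f1 has_real_derivative f2 y) (at y within {0..1})"
  shows "(\<lambda>y. kk0 s r y * f2 y) integrable_on {0..1}"
    "integral {0..1} (\<lambda>y. kk0 s r y * f2 y) = kk0 s r 1 * f1 1 - kk0 s r 0 * f1 0
        - kk1 s r 1 * f0 1 + kk1 s r 0 * f0 0 + integral {0..1} (\<lambda>y. kk2 s r y * f0 y)"
proof -
  have c0: "continuous_on {0..1} f0" by (rule DERIV_continuous_on[OF d0])
  have i2: "(\<lambda>y. kk2 s r y * f0 y) integrable_on {0..1}"
    by (intro integrable_continuous_interval continuous_intros c0 kk2_cont)
  have F: "((\<lambda>y. kk0 s r y * f2 y - kk2 s r y * f0 y) has_integral
      ((kk0 s r 1 * f1 1 - kk1 s r 1 * f0 1) - (kk0 s r 0 * f1 0 - kk1 s r 0 * f0 0))) {0..1}"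
  proof (rule fundamental_theorem_of_calculus[where f="\<lambda>y. kk0 s r y * f1 y - kk1 s r y * f0 y"])
    fix y :: real assume y: "y \<in> {0..1}"
    have "((\<lambda>y. kk0 s r y * f1 y - kk1 s r y * f0 y) has_real_derivative
        (kk1 s r y * f1 y + f2 y * kk0 s r y) - (kk2 s r y * f0 y + f1 y * kk1 s r y)) (at y within {0..1})"
      by (intro DERIV_diff DERIV_mult kk0_deriv kk1_deriv d0[OF y] d1[OF y])
    then show "((\<lambda>y. kk0 s r y * f1 y - kk1 s r y * f0 y) has_vector_derivative
        (kk0 s r y * f2 y - kk2 s r y * f0 y)) (at y within {0..1})"
      by (simp add: has_real_derivative_iff_has_vector_derivative[symmetric] algebra_simps)
  qed simp
  have "((\<lambda>y. (kk0 s r y * f2 y - kk2 s r y * f0 y) + kk2 s r y * f0 y) has_integral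
      ((kk0 s r 1 * f1 1 - kk1 s r 1 * f0 1) - (kk0 s r 0 * f1 0 - kk1 s r 0 * f0 0))
       + integral {0..1} (\<lambda>y. kk2 s r y * f0 y)) {0..1}"
    by (intro has_integral_add F integrable_integral i2)
  then have H: "((\<lambda>y. kk0 s r y * f2 y) has_integral
      ((kk0 s r 1 * f1 1 - kk1 s r 1 * f0 1) - (kk0 s r 0 * f1 0 - kk1 s r 0 * f0 0))
       + integral {0..1} (\<lambda>y. kk2 s r y * f0 y)) {0..1}" by simp
  then show "(\<lambda>y. kk0 s r y * f2 y) integrable_on {0..1}" by blast
  from integral_unique[OF H] show "integral {0..1} (\<lambda>y. kk0 s r y * f2 y) = kk0 s r 1 * f1 1 - kk0 s r 0 * f1 0
        - kk1 s r 1 * f0 1 + kk1 s r 0 * f0 0 + integral {0..1} (\<lambda>y. kk2 s r y * f0 y)"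
    by simp
qed

lemma int_sq_nonneg:
  fixes f :: "real \<Rightarrow> real"
  assumes "continuous_on {a..b} f" shows "0 \<le> integral {a..b} (\<lambda>x. (f x)^2)"
  by (rule integral_nonneg) (auto intro!: integrable_continuous_interval continuous_intros assms)

lemma norm_bounds:
  fixes f :: "real \<Rightarrow> real"
  assumes s: "0 < s" and f: "continuous_on {0..1} f"
  defines "w \<equiv> (\<lambda>x. f x - integral {0..x} (\<lambda>y. KK s x y * f y))"
  defines "W \<equiv> integral {0..1} (\<lambda>x. (w x)^2)"
  defines "M \<equiv> integral {0..1} (\<lambda>x. integral {0..x} (\<lambda>y. (LL s x y)^2))"
  defines "\<Lambda> \<equiv> integral {0..1} (\<lambda>y. (LL s 1 y)^2)"
  shows "integral {0..1} (\<lambda>x. (f x)^2) \<le> (1 + sqrt M)^2 * W"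
    and "(f 1)^2 \<le> 2 * (w 1)^2 + 2 * \<Lambda> * W"
    and "continuous_on {0..1} w"
proof -
  have cKf: "continuous_on ({0..1}\<times>{0..1}) (\<lambda>(x,y). KK s x y * f y)"
    by (auto simp: split_beta intro!: continuous_intros continuous_on_compose2[OF f])
  have cw: "continuous_on {0..1} w" unfolding w_def
    by (intro continuous_intros f param_cont[OF cKf])
  then show "continuous_on {0..1} w" .
  define Lw where "Lw x = integral {0..x} (\<lambda>y. LL s x y * w y)" for x
  have inv: "f x = w x + Lw x" if "x \<in> {0..1}" for x
    using inverse_transform[OF s f that] by (simp add: w_def Lw_def)
  have cLw: "continuous_on {0..1} Lw"
  proof -
    have "continuous_on {0..1} (\<lambda>x. f x - w x)" by (intro continuous_intros f cw)
    then show ?thesis by (rule continuous_on_eq) (use inv in auto)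
  qed
  have W0: "0 \<le> W" unfolding W_def by (rule int_sq_nonneg[OF cw])
  have cL2: "continuous_on ({0..1}\<times>{0..1}) (\<lambda>(x,y). (LL s x y)^2)"
    by (auto simp: split_beta intro!: continuous_intros)
  have cM: "continuous_on {0..1} (\<lambda>x. integral {0..x} (\<lambda>y. (LL s x y)^2))"
    by (rule param_cont[OF cL2])
  have M0: "0 \<le> M" unfolding M_def
    by (rule integral_nonneg) (auto intro!: integrable_continuous_interval cM integral_nonneg
        integrable_continuous_interval continuous_intros)
  have bnd: "(Lw x)^2 \<le> integral {0..x} (\<lambda>y. (LL s x y)^2) * W" if x: "x \<in> {0..1}" for x
  proof -
    have sub: "{0..x} \<subseteq> {0..1}" using x by auto
    have cw': "continuous_on {0..x} w" using continuous_on_subset[OF cw sub] .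
    have "(Lw x)^2 \<le> integral {0..x} (\<lambda>y. (LL s x y)^2) * integral {0..x} (\<lambda>y. (w y)^2)"
      unfolding Lw_def by (rule cauchy_schwarz_int) (auto intro!: continuous_intros cw')
    also have "integral {0..x} (\<lambda>y. (w y)^2) \<le> W"
      unfolding W_def
      by (rule integral_subset_le[OF sub]) (auto intro!: integrable_continuous_interval continuous_intros cw cw')
    then have "integral {0..x} (\<lambda>y. (LL s x y)^2) * integral {0..x} (\<lambda>y. (w y)^2) \<le> integral {0..x} (\<lambda>y. (LL s x y)^2) * W"
      by (intro mult_left_mono integral_nonneg) (auto intro!: integrable_continuous_interval continuous_intros)
    finally show ?thesis .
  qed
  have LwW: "integral {0..1} (\<lambda>x. (Lw x)^2) \<le> M * W"
  proof -
    have "integral {0..1} (\<lambda>x. (Lw x)^2) \<le> integral {0..1} (\<lambda>x. integral {0..x} (\<lambda>y. (LL s x y)^2) * W)"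
      by (rule integral_le) (auto intro!: integrable_continuous_interval continuous_intros cLw cM bnd)
    also have "\<dots> = M * W" by (simp add: M_def)
    finally show ?thesis .
  qed
  have cs: "(integral {0..1} (\<lambda>x. w x * Lw x))^2 \<le> W * integral {0..1} (\<lambda>x. (Lw x)^2)"
    unfolding W_def by (rule cauchy_schwarz_int[OF cw cLw])
  define P where "P = integral {0..1} (\<lambda>x. w x * Lw x)"
  define Q where "Q = integral {0..1} (\<lambda>x. (Lw x)^2)"
  have Q0: "0 \<le> Q" unfolding Q_def by (rule int_sq_nonneg[OF cLw])
  have "P \<le> sqrt W * sqrt Q"
  proof -
    have "P \<le> \<bar>P\<bar>" by simp
    also have "\<bar>P\<bar> = sqrt (P^2)" by simp
    also have "\<dots> \<le> sqrt (W * Q)" by (rule real_sqrt_le_mono) (use cs in \<open>simp add: P_def Q_def\<close>)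
    finally show ?thesis by (simp add: real_sqrt_mult)
  qed
  also have "sqrt W * sqrt Q \<le> sqrt W * sqrt (M * W)"
    by (rule mult_left_mono) (use LwW W0 in \<open>auto simp: Q_def\<close>)
  also have "sqrt W * sqrt (M * W) = sqrt M * (sqrt W * sqrt W)" by (simp add: real_sqrt_mult)
  also have "sqrt W * sqrt W = W" using W0 by simp
  finally have P_le: "P \<le> sqrt M * W" .
  have "integral {0..1} (\<lambda>x. (f x)^2) = integral {0..1} (\<lambda>x. (w x)^2 + 2 * (w x * Lw x) + (Lw x)^2)"
    by (rule integral_cong) (simp add: inv power2_eq_square algebra_simps)
  also have "\<dots> = W + 2 * P + Q"
    unfolding W_def P_def Q_def
    by (intro integral_unique has_integral_add has_integral_mult_right integrable_integral
        integrable_continuous_interval continuous_intros cw cLw)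
  also have "\<dots> \<le> W + 2 * (sqrt M * W) + M * W" using P_le LwW by (simp add: Q_def)
  also have "\<dots> = (1 + sqrt M)^2 * W" using M0 by (simp add: power2_eq_square algebra_simps)
  finally show "integral {0..1} (\<lambda>x. (f x)^2) \<le> (1 + sqrt M)^2 * W" .
  have "(Lw 1)^2 \<le> \<Lambda> * W" using bnd[of 1] by (simp add: \<Lambda>_def)
  moreover have "(f 1)^2 = (w 1 + Lw 1)^2" using inv[of 1] by simp
  moreover have "(w 1 + Lw 1)^2 \<le> 2 * (w 1)^2 + 2 * (Lw 1)^2"
  proof -
    have h: "0 \<le> (w 1 - Lw 1)^2" by simp
    have e1: "(w 1 + Lw 1)^2 = (w 1)^2 + 2*(w 1*Lw 1) + (Lw 1)^2" by (simp add: power2_eq_square algebra_simps)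
    have e2: "(w 1 - Lw 1)^2 = (w 1)^2 - 2*(w 1*Lw 1) + (Lw 1)^2" by (simp add: power2_eq_square algebra_simps)
    show ?thesis using h e1 e2 by linarith
  qed
  ultimately show "(f 1)^2 \<le> 2 * (w 1)^2 + 2 * \<Lambda> * W" by linarith
qed

lemma norm_bounds':
  fixes f w :: "real \<Rightarrow> real"
  assumes s: "0 < s" and f: "continuous_on {0..1} f"
    and w: "w = (\<lambda>x. f x - integral {0..x} (\<lambda>y. KK s x y * f y))"
  shows "integral {0..1} (\<lambda>x. (f x)^2) \<le> (1 + sqrt (integral {0..1} (\<lambda>x. integral {0..x} (\<lambda>y. (LL s x y)^2))))^2 * integral {0..1} (\<lambda>x. (w x)^2)"
    and "(f 1)^2 \<le> 2 * (w 1)^2 + 2 * integral {0..1} (\<lambda>y. (LL s 1 y)^2) * integral {0..1} (\<lambda>x. (w x)^2)"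
  unfolding w by (rule norm_bounds[OF s f])+

lemma final_alg:
  fixes A B C E G U W M Cc L uh1 wh1 Ee e0 :: real
  assumes "B^2 \<le> G * U" "U \<le> (1+sqrt M)^2 * W" "0 \<le> G" "C = Cc * uh1"
    "uh1^2 \<le> 2*wh1^2 + 2*L*W" "E = Ee*e0"
  shows "(A + B - C + E)^2 \<le> 6*A^2 + (3*(1+sqrt M)^2*G + 6*Cc^2*L)*W + 6*Cc^2*wh1^2 + 6*Ee^2*e0^2"
proof -
  have s1: "(A + B - C + E)^2 \<le> 3*(A+E)^2 + 3/2*(B-C)^2"
  proof -
    have "0 \<le> (2*(A+E) - (B-C))^2" by simp
    moreover have "(A + B - C + E)^2 = (A+E)^2 + 2*((A+E)*(B-C)) + (B-C)^2" by (simp add: power2_eq_square algebra_simps)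
    moreover have "(2*(A+E) - (B-C))^2 = 4*(A+E)^2 - 4*((A+E)*(B-C)) + (B-C)^2" by (simp add: power2_eq_square algebra_simps)
    ultimately show ?thesis by linarith
  qed
  have s2: "(x+y)^2 \<le> 2*x^2 + 2*y^2" for x y :: real
  proof -
    have "0 \<le> (x-y)^2" by simp
    moreover have "(x+y)^2 = x^2 + 2*(x*y) + y^2" by (simp add: power2_eq_square algebra_simps)
    moreover have "(x-y)^2 = x^2 - 2*(x*y) + y^2" by (simp add: power2_eq_square algebra_simps)
    ultimately show ?thesis by linarith
  qed
  have a: "(A+E)^2 \<le> 2*A^2 + 2*E^2" by (rule s2)
  have b: "(B-C)^2 \<le> 2*B^2 + 2*C^2" using s2[of B "-C"] by simp
  have B2: "B^2 \<le> G * ((1+sqrt M)^2 * W)"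
    using assms(1) mult_left_mono[OF assms(2) assms(3)] by linarith
  have C2: "C^2 \<le> Cc^2 * (2*wh1^2 + 2*L*W)"
    unfolding assms(4) power_mult_distrib by (rule mult_left_mono[OF assms(5)]) simp
  have E2: "E^2 = Ee^2 * e0^2" unfolding assms(6) by (simp add: power_mult_distrib)
  have "(A + B - C + E)^2 \<le> 6*A^2 + 6*E^2 + 3*B^2 + 3*C^2" using s1 a b by linarith
  also have "\<dots> \<le> 6*A^2 + 6*E^2 + 3*(G * ((1+sqrt M)^2 * W)) + 3*(Cc^2 * (2*wh1^2 + 2*L*W))"
    using B2 C2 by linarith
  also have "\<dots> = 6*A^2 + (3*(1+sqrt M)^2*G + 6*Cc^2*L)*W + 6*Cc^2*wh1^2 + 6*Ee^2*e0^2"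
    unfolding E2 by (simp add: algebra_simps)
  finally show ?thesis .
qed

theorem lemma2:
  fixes eps lam q :: real
    and u ux uxx ut uh uhx uhxx uht :: "real \<Rightarrow> real \<Rightarrow> real"
    and tt :: "nat \<Rightarrow> real"
  defines "k \<equiv> kgain eps lam q"
    and "U \<equiv> (\<lambda>j. integral {0..1} (\<lambda>y. kgain eps lam q y * uh y (tt j)))"
    and "wh \<equiv> (\<lambda>x t. uh x t - integral {0..x} (\<lambda>y. kerK eps lam x y * uh y t))"
    and "wt \<equiv> (\<lambda>x t. (u x t - uh x t)
                 + integral {0..x} (\<lambda>y. kerQ eps lam q x y * (u y t - uh y t)))"
    and "d \<equiv> (\<lambda>j t. integral {0..1} (\<lambda>y. kgain eps lam q y * (uh y (tt j) - uh y t)))"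
  assumes eps_pos: "eps > 0" and lam_pos: "lam > 0"
    and q_bound: "q > (lam + eps) / (2 * eps)"
    and tt0: "tt 0 = 0" and tt_mono: "strict_mono tt"
    \<comment> \<open>regularity of the plant and observer states on each sampling interval\<close>
    and u_x: "\<And>j t x. t \<in> {tt j<..<tt (Suc j)} \<Longrightarrow> x \<in> {0..1} \<Longrightarrow>
               ((\<lambda>x. u x t) has_real_derivative ux x t) (at x within {0..1})"
    and u_xx: "\<And>j t x. t \<in> {tt j<..<tt (Suc j)} \<Longrightarrow> x \<in> {0..1} \<Longrightarrow>
               ((\<lambda>x. ux x t) has_real_derivative uxx x t) (at x within {0..1})"
    and u_t: "\<And>j t x. t \<in> {tt j<..<tt (Suc j)} \<Longrightarrow> x \<in> {0..1} \<Longrightarrow>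
               ((\<lambda>s. u x s) has_real_derivative ut x t) (at t)"
    and uh_x: "\<And>j t x. t \<in> {tt j<..<tt (Suc j)} \<Longrightarrow> x \<in> {0..1} \<Longrightarrow>
               ((\<lambda>x. uh x t) has_real_derivative uhx x t) (at x within {0..1})"
    and uh_xx: "\<And>j t x. t \<in> {tt j<..<tt (Suc j)} \<Longrightarrow> x \<in> {0..1} \<Longrightarrow>
               ((\<lambda>x. uhx x t) has_real_derivative uhxx x t) (at x within {0..1})"
    and uh_t: "\<And>j t x. t \<in> {tt j<..<tt (Suc j)} \<Longrightarrow> x \<in> {0..1} \<Longrightarrow>
               ((\<lambda>s. uh x s) has_real_derivative uht x t) (at t)"
    and uh_t_cont: "\<And>j. continuous_on ({0..1} \<times> {tt j<..<tt (Suc j)}) (\<lambda>(x, t). uht x t)"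
    and uh_sample_cont: "\<And>j. continuous_on {0..1} (\<lambda>x. uh x (tt j))"
    \<comment> \<open>plant\<close>
    and plant_pde: "\<And>j t x. t \<in> {tt j<..<tt (Suc j)} \<Longrightarrow> x \<in> {0..1} \<Longrightarrow>
               ut x t = eps * uxx x t + lam * u x t"
    and plant_bc0: "\<And>j t. t \<in> {tt j<..<tt (Suc j)} \<Longrightarrow> ux 0 t = 0"
    and plant_bc1: "\<And>j t. t \<in> {tt j<..<tt (Suc j)} \<Longrightarrow> ux 1 t + q * u 1 t = U j"
    \<comment> \<open>observer\<close>
    and obs_pde: "\<And>j t x. t \<in> {tt j<..<tt (Suc j)} \<Longrightarrow> x \<in> {0..1} \<Longrightarrow>
               uht x t = eps * uhxx x t + lam * uh x t + p1gain eps lam q x * (u 0 t - uh 0 t)"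
    and obs_bc0: "\<And>j t. t \<in> {tt j<..<tt (Suc j)} \<Longrightarrow>
               uhx 0 t = p10gain eps lam * (u 0 t - uh 0 t)"
    and obs_bc1: "\<And>j t. t \<in> {tt j<..<tt (Suc j)} \<Longrightarrow> uhx 1 t + q * uh 1 t = U j"
  shows "\<forall>j. \<forall>t \<in> {tt j<..<tt (Suc j)}.
     d j differentiable (at t) \<and>
     (deriv (d j) t)^2 \<le>
        6 * eps^2 * (k 1)^2 * (d j t)^2
      + (3 * (1 + sqrt (integral {0..1} (\<lambda>x. integral {0..x} (\<lambda>y. (kerL eps lam x y)^2))))^2
           * integral {0..1} (\<lambda>y. (eps * deriv (deriv k) y + eps * k 1 * k y + lam * k y)^2)
         + 6 * (eps * q * k 1 + eps * deriv k 1)^2 * integral {0..1} (\<lambda>y. (kerL eps lam 1 y)^2))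
        * integral {0..1} (\<lambda>x. (wh x t)^2)
      + 6 * (eps * q * k 1 + eps * deriv k 1)^2 * (wh 1 t)^2
      + 6 * (lam * k 0 / 2 + integral {0..1} (\<lambda>y. k y * p1gain eps lam q y))^2 * (wt 0 t)^2"
proof -
  have eps0: "eps \<noteq> 0" using eps_pos by simp
  define s where "s = lam / eps"
  have s0: "0 < s" unfolding s_def using eps_pos lam_pos by simp
  define r where "r = rpar eps lam q"
  have kdef: "k = kk0 s r" unfolding k_def s_def r_def by (rule kgain_eq)
  have dk1: "deriv k = kk1 s r" unfolding kdef by (rule deriv_kk0)
  have dk2: "deriv (deriv k) = kk2 s r" unfolding dk1 by (rule deriv_kk1)
  have KL: "kerK eps lam = KK s" "kerL eps lam = LL s" by (simp_all add: kerK_ps kerL_ps s_def)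
  have kc: "continuous_on S k" for S unfolding kdef by (rule kk0_cont)
  show ?thesis
  proof (intro allI ballI)
    fix j t assume t: "t \<in> {tt j<..<tt (Suc j)}"
    define I where "I = {tt j<..<tt (Suc j)}"
    have tI: "t \<in> I" using t by (simp add: I_def)
    have uhc: "continuous_on {0..1} (\<lambda>x. uh x \<tau>)" if "\<tau> \<in> I" for \<tau>
      by (rule DERIV_continuous_on) (rule uh_x, use that in \<open>auto simp: I_def\<close>)
    have uhjc: "continuous_on {0..1} (\<lambda>x. uh x (tt j))" by (rule uh_sample_cont)
    have uhtc: "continuous_on {0..1} (\<lambda>x. uht x t)"
      by (rule continuous_on_compose2[OF uh_t_cont[of j], of _ "\<lambda>x. (x, t)", simplified])
         (use t in \<open>auto intro!: continuous_intros\<close>)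
    have Dd: "(d j has_real_derivative integral {0..1} (\<lambda>y. - (k y * uht y t))) (at t)"
    proof -
      have "((\<lambda>\<tau>. integral (cbox 0 1) (\<lambda>y. k y * (uh y (tt j) - uh y \<tau>))) has_field_derivative
          integral (cbox 0 1) (\<lambda>y. - (k y * uht y t))) (at t within I)"
      proof (rule leibniz_rule_field_derivative[where fx="\<lambda>\<tau> y. - (k y * uht y \<tau>)"])
        fix \<tau> y :: real assume \<tau>: "\<tau> \<in> I" and y: "y \<in> cbox 0 1"
        have "((\<lambda>\<tau>. k y * (uh y (tt j) - uh y \<tau>)) has_real_derivative k y * (0 - uht y \<tau>)) (at \<tau>)"
          by (intro DERIV_cmult DERIV_diff DERIV_const uh_t[of \<tau> j y]) (use \<tau> y in \<open>auto simp: I_def\<close>)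
        then show "((\<lambda>\<tau>. k y * (uh y (tt j) - uh y \<tau>)) has_field_derivative - (k y * uht y \<tau>)) (at \<tau> within I)"
          by (rule has_field_derivative_at_within[OF DERIV_cong]) simp
      next
        fix \<tau> assume tau: "\<tau> \<in> I"
        show "(\<lambda>y. k y * (uh y (tt j) - uh y \<tau>)) integrable_on cbox 0 1"
          unfolding cbox_interval
          by (intro integrable_continuous_interval continuous_on_mult continuous_on_diff kc uhjc uhc[OF tau])
      next
        have c2: "continuous_on (I \<times> cbox 0 1) (\<lambda>p. uht (snd p) (fst p))"
          by (rule continuous_on_compose2[OF uh_t_cont[of j], of _ "\<lambda>p. (snd p, fst p)", simplified])
             (auto intro!: continuous_intros simp: I_def)
        have c1: "continuous_on (I \<times> cbox 0 1) (\<lambda>p. k (snd p))"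
          by (rule continuous_on_compose2[OF kc[of UNIV]]) (auto intro: continuous_on_snd continuous_on_id)
        show "continuous_on (I \<times> cbox 0 1) (\<lambda>(\<tau>, y). - (k y * uht y \<tau>))"
          unfolding split_beta by (intro continuous_on_minus continuous_on_mult c1 c2)
      qed (use tI in \<open>auto simp: I_def\<close>)
      moreover have "at t within I = at t" using tI by (intro at_within_open) (auto simp: I_def)
      moreover have "(\<lambda>\<tau>. integral (cbox 0 1) (\<lambda>y. k y * (uh y (tt j) - uh y \<tau>))) = d j"
        by (simp add: d_def k_def cbox_interval)
      ultimately show ?thesis by (simp add: cbox_interval)
    qed
    have dd: "d j differentiable (at t)"
      using Dd unfolding has_field_derivative_def by (rule differentiableI)
    define Ikt where "Ikt = integral {0..1} (\<lambda>y. k y * uht y t)"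
    have derd: "deriv (d j) t = - Ikt"
      using DERIV_imp_deriv[OF Dd] by (simp add: Ikt_def)
    define e0 where "e0 = u 0 t - uh 0 t"
    define Ikh where "Ikh = integral {0..1} (\<lambda>y. k y * uh y t)"
    define Ik2 where "Ik2 = integral {0..1} (\<lambda>y. kk2 s r y * uh y t)"
    define P where "P = integral {0..1} (\<lambda>y. k y * p1gain eps lam q y)"
    define gq where "gq y = eps * kk2 s r y + eps * k 1 * k y + lam * k y" for y
    define B where "B = integral {0..1} (\<lambda>y. gq y * uh y t)"
    define Cc where "Cc = eps * q * k 1 + eps * kk1 s r 1"
    define Ee where "Ee = lam * k 0 / 2 + P"
    have uhct: "continuous_on {0..1} (\<lambda>x. uh x t)" using uhc[OF tI] .
    note ibp = ibp2[of "\<lambda>y. uh y t" "\<lambda>y. uhx y t" "\<lambda>y. uhxx y t" s r]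
    have ibpA: "(\<lambda>y. k y * uhxx y t) integrable_on {0..1}"
      unfolding kdef by (rule ibp(1)) (use uh_x[OF t] uh_xx[OF t] in auto)
    have ibpB: "integral {0..1} (\<lambda>y. k y * uhxx y t) = k 1 * uhx 1 t - k 0 * uhx 0 t
        - kk1 s r 1 * uh 1 t + kk1 s r 0 * uh 0 t + Ik2"
      unfolding kdef Ik2_def by (rule ibp(2)) (use uh_x[OF t] uh_xx[OF t] in auto)
    have i_kt: "(\<lambda>y. k y * uht y t) integrable_on {0..1}"
      by (intro integrable_continuous_interval continuous_intros kc uhtc)
    have i_kh: "(\<lambda>y. k y * uh y t) integrable_on {0..1}"
      by (intro integrable_continuous_interval continuous_intros kc uhct)
    have i_h: "(\<lambda>y. eps * (k y * uhxx y t) + lam * (k y * uh y t)) integrable_on {0..1}"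
      by (intro integrable_add integrable_on_mult_right ibpA i_kh)
    have Ikt1: "Ikt = eps * integral {0..1} (\<lambda>y. k y * uhxx y t) + lam * Ikh + e0 * P"
    proof -
      have "Ikt = integral {0..1} (\<lambda>y. (eps * (k y * uhxx y t) + lam * (k y * uh y t))
              + (k y * uht y t - (eps * (k y * uhxx y t) + lam * (k y * uh y t))))"
        by (simp add: Ikt_def)
      also have "\<dots> = integral {0..1} (\<lambda>y. eps * (k y * uhxx y t) + lam * (k y * uh y t))
              + integral {0..1} (\<lambda>y. k y * uht y t - (eps * (k y * uhxx y t) + lam * (k y * uh y t)))"
        by (intro integral_add i_h integrable_diff i_kt)
      also have "integral {0..1} (\<lambda>y. eps * (k y * uhxx y t) + lam * (k y * uh y t))
          = eps * integral {0..1} (\<lambda>y. k y * uhxx y t) + lam * Ikh"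
        by (subst integral_add) (auto intro!: integrable_on_mult_right ibpA i_kh simp: Ikh_def)
      also have "integral {0..1} (\<lambda>y. k y * uht y t - (eps * (k y * uhxx y t) + lam * (k y * uh y t)))
          = integral {0..1} (\<lambda>y. e0 * (k y * p1gain eps lam q y))"
      proof (rule integral_cong)
        fix y :: real assume y: "y \<in> {0..1}"
        show "k y * uht y t - (eps * (k y * uhxx y t) + lam * (k y * uh y t)) = e0 * (k y * p1gain eps lam q y)"
          unfolding obs_pde[OF t y] by (simp add: e0_def algebra_simps)
      qed
      also have "\<dots> = e0 * P" by (simp add: P_def)
      finally show ?thesis .
    qed
    have Ud: "U j = d j t + Ikh"
    proof -
      have "d j t = integral {0..1} (\<lambda>y. k y * uh y (tt j) - k y * uh y t)"
        by (simp add: d_def k_def algebra_simps)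
      also have "\<dots> = U j - Ikh"
      proof -
        have Uj: "U j = integral {0..1} (\<lambda>y. k y * uh y (tt j))" by (simp add: U_def k_def)
        show ?thesis unfolding Uj Ikh_def
          by (rule integral_diff) (auto intro!: integrable_continuous_interval continuous_intros kc uhjc uhct)
      qed
      finally show ?thesis by simp
    qed
    have Bv: "B = eps * Ik2 + eps * k 1 * Ikh + lam * Ikh"
    proof -
      have c2: "continuous_on {0..1} (kk2 s r)" by (rule kk2_cont)
      have "B = integral {0..1} (\<lambda>y. eps * (kk2 s r y * uh y t) + (eps * k 1) * (k y * uh y t) + lam * (k y * uh y t))"
        by (simp add: B_def gq_def algebra_simps)
      also have "\<dots> = eps * Ik2 + eps * k 1 * Ikh + lam * Ikh"
        unfolding Ik2_def Ikh_def
        by (intro integral_unique has_integral_add has_integral_mult_right integrable_integral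
            integrable_continuous_interval continuous_intros kc uhct c2)
      finally show ?thesis .
    qed
    have bc1: "uhx 1 t = U j - q * uh 1 t" using obs_bc1[OF t] by simp
    have bc0: "uhx 0 t = - (lam / (2 * eps)) * e0" using obs_bc0[OF t] by (simp add: p10gain_def e0_def)
    have main: "Ikt = eps * k 1 * d j t + B - Cc * uh 1 t + Ee * e0"
    proof -
      define a where "a = lam / (2 * eps)"
      have lamE: "lam = 2 * eps * a" using eps0 by (simp add: a_def)
      have bc0': "uhx 0 t = - a * e0" using bc0 by (simp add: a_def)
      show ?thesis
        unfolding Ikt1 ibpB Bv Cc_def Ee_def bc1 bc0' Ud kk1_0 lamE
        by (simp add: algebra_simps)
    qed
    have wh_eq: "(\<lambda>x. wh x t) = (\<lambda>x. uh x t - integral {0..x} (\<lambda>y. KK s x y * uh y t))"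
      by (simp add: wh_def KL)
    note nb = norm_bounds'[OF s0 uhct wh_eq]
    have gqc: "continuous_on {0..1} gq" unfolding gq_def by (intro continuous_intros kc kk2_cont)
    have B2: "B^2 \<le> integral {0..1} (\<lambda>y. (gq y)^2) * integral {0..1} (\<lambda>y. (uh y t)^2)"
      unfolding B_def by (rule cauchy_schwarz_int[OF gqc uhct])
    have G0: "0 \<le> integral {0..1} (\<lambda>y. (gq y)^2)" by (rule int_sq_nonneg[OF gqc])
    have wt0: "wt 0 t = e0" by (simp add: wt_def e0_def)
    have fin: "(eps * k 1 * d j t + B - Cc * uh 1 t + Ee * e0)^2 \<le>
        6*(eps * k 1 * d j t)^2 + (3*(1+sqrt (integral {0..1} (\<lambda>x. integral {0..x} (\<lambda>y. (LL s x y)^2))))^2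
           * integral {0..1} (\<lambda>y. (gq y)^2) + 6*Cc^2*integral {0..1} (\<lambda>y. (LL s 1 y)^2))
           * integral {0..1} (\<lambda>x. (wh x t)^2) + 6*Cc^2*(wh 1 t)^2 + 6*Ee^2*e0^2"
      by (rule final_alg[OF B2 nb(1) G0 refl nb(2) refl])
    have gq_eq: "(\<lambda>y. (eps * deriv (deriv k) y + eps * k 1 * k y + lam * k y)^2) = (\<lambda>y. (gq y)^2)"
      by (simp add: gq_def dk2)
    have ineq: "     (deriv (d j) t)^2 \<le>
        6 * eps^2 * (k 1)^2 * (d j t)^2
      + (3 * (1 + sqrt (integral {0..1} (\<lambda>x. integral {0..x} (\<lambda>y. (kerL eps lam x y)^2))))^2
           * integral {0..1} (\<lambda>y. (eps * deriv (deriv k) y + eps * k 1 * k y + lam * k y)^2)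
         + 6 * (eps * q * k 1 + eps * deriv k 1)^2 * integral {0..1} (\<lambda>y. (kerL eps lam 1 y)^2))
        * integral {0..1} (\<lambda>x. (wh x t)^2)
      + 6 * (eps * q * k 1 + eps * deriv k 1)^2 * (wh 1 t)^2
      + 6 * (lam * k 0 / 2 + integral {0..1} (\<lambda>y. k y * p1gain eps lam q y))^2 * (wt 0 t)^2"
    proof -
      have "(deriv (d j) t)^2 = (eps * k 1 * d j t + B - Cc * uh 1 t + Ee * e0)^2"
        by (simp only: derd power2_minus main)
      also note fin
      finally show ?thesis
        unfolding gq_eq unfolding KL wt0 dk1 Cc_def[symmetric] P_def[symmetric] Ee_def[symmetric]
        by (simp add: power_mult_distrib mult.assoc)
    qed
    show "d j differentiable (at t) \<and> (deriv (d j) t)^2 \<le>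
        6 * eps^2 * (k 1)^2 * (d j t)^2
      + (3 * (1 + sqrt (integral {0..1} (\<lambda>x. integral {0..x} (\<lambda>y. (kerL eps lam x y)^2))))^2
           * integral {0..1} (\<lambda>y. (eps * deriv (deriv k) y + eps * k 1 * k y + lam * k y)^2)
         + 6 * (eps * q * k 1 + eps * deriv k 1)^2 * integral {0..1} (\<lambda>y. (kerL eps lam 1 y)^2))
        * integral {0..1} (\<lambda>x. (wh x t)^2)
      + 6 * (eps * q * k 1 + eps * deriv k 1)^2 * (wh 1 t)^2
      + 6 * (lam * k 0 / 2 + integral {0..1} (\<lambda>y. k y * p1gain eps lam q y))^2 * (wt 0 t)^2"
      using dd ineq by blast
  qed
qed

end
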